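(* Assume $d \ge 2$. Then almost surely \[ \liminf_{n \to \infty} \frac{r_n}{(\ln n)/(d \ln\ln n)} \ge 1. \]
   Context: Fix an integer $d \ge 2$. Let $X^{(1)}, X^{(2)}, \dots$ be i.i.d. random vectors in $\mathbb{R}^d$ with independent Exponential$(1)$ coordinates. Write $x \prec y$ if $x_j<y_j$ for all $j$. For $1 \le k \le n$, $X^{(k)}$ is a current record at time $n$ if $X^{(k)} \not\prec X^{(i)}$ for all $1 \le i \le n$; $r_n$ denotes the number of current records at time $n$. *)

theory Defs
  imports "HOL-Probability.Probability"
begin

text \<open>Vectors in R^d are represented as functions nat => real, coordinates j < d.
  Strict componentwise order x \<prec> y: x_j < y_j for all j < d.\<close>
definition strictly_below :: "nat \<Rightarrow> (nat \<Rightarrow> real) \<Rightarrow> (nat \<Rightarrow> real) \<Rightarrow> bool" where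
  "strictly_below d x y \<longleftrightarrow> (\<forall>j<d. x j < y j)"

definition current_record :: "nat \<Rightarrow> (nat \<Rightarrow> nat \<Rightarrow> real) \<Rightarrow> nat \<Rightarrow> nat \<Rightarrow> bool" where
  "current_record d x n k \<longleftrightarrow> 1 \<le> k \<and> k \<le> n \<and> (\<forall>i\<in>{1..n}. \<not> strictly_below d (x k) (x i))"

definition num_records :: "nat \<Rightarrow> (nat \<Rightarrow> nat \<Rightarrow> real) \<Rightarrow> nat \<Rightarrow> nat" where
  "num_records d x n = card {k. current_record d x n k}"

end

theory Submission
  imports Defs "HOL-Real_Asymp.Real_Asymp"
begin

definition Aset :: "real \<Rightarrow> real \<Rightarrow> nat \<Rightarrow> (real \<times> real) set" where
  "Aset H T j = {p. real j * H < fst p \<and> fst p \<le> (real j + 1) * H \<and> T - real j * H < snd p}"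

definition Rset :: "real \<Rightarrow> real \<Rightarrow> nat \<Rightarrow> (real \<times> real) set" where
  "Rset H T j = {p. (real j + 1) * H < fst p \<and> T - real j * H < snd p}"

lemma Aset_disj:
  assumes "H > 0" "p \<in> Aset H T j" "p \<in> Aset H T j'" shows "j = j'"
proof -
  have b: "real j * H < fst p" "fst p \<le> (real j' + 1) * H" "real j' * H < fst p" "fst p \<le> (real j + 1) * H"
    using assms(2,3) unfolding Aset_def by auto
  have a: "real j * H < (real j' + 1) * H" "real j' * H < (real j + 1) * H"
    using b by linarith+
  have "real j < real j' + 1" using mult_right_less_imp_less[OF a(1)] assms(1) by simp
  moreover have "real j' < real j + 1" using mult_right_less_imp_less[OF a(2)] assms(1) by simp
  ultimately show ?thesis by linarith
qed

lemma finite_records: "finite {k. current_record d x n k}"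
  by (rule finite_subset[of _ "{1..n}"]) (auto simp: current_record_def)

lemma cert_good:
  fixes x :: "nat \<Rightarrow> nat \<Rightarrow> real" and T H :: real and KK :: nat
  assumes d: "d \<ge> 2" and H: "H > 0" and Nn: "N \<le> n" and nM: "n \<le> M"
  defines "pt \<equiv> \<lambda>q. (x q 0, x q 1)"
  defines "Good \<equiv> {j. j < KK \<and> (\<exists>q\<in>{1..N}. pt q \<in> Aset H T j) \<and> (\<forall>q\<in>{N<..M}. pt q \<notin> Aset H T j)
       \<and> (\<forall>q\<in>{1..M}. pt q \<notin> Rset H T j)}"
  shows "card Good \<le> num_records d x n"
proof -
  define S where "S j = {q\<in>{1..N}. pt q \<in> Aset H T j}" for j
  define f where "f q = x q 0 + x q 1" for q
  have "\<exists>w. w \<in> S j \<and> (\<forall>q\<in>S j. f q \<le> f w)" if "j \<in> Good" for j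
  proof -
    have fin: "finite (f ` S j)" by (simp add: S_def)
    have ne: "f ` S j \<noteq> {}" using that by (auto simp: Good_def S_def)
    obtain w where "w \<in> S j" "f w = Max (f ` S j)" using Max_in[OF fin ne] by auto
    then show ?thesis using fin by (metis Max_ge image_eqI)
  qed
  then obtain w where w: "\<And>j. j \<in> Good \<Longrightarrow> w j \<in> S j \<and> (\<forall>q\<in>S j. f q \<le> f (w j))" by metis
  have rec: "current_record d x n (w j)" if j: "j \<in> Good" for j
  proof -
    have wS: "w j \<in> S j" and wmax: "\<forall>q\<in>S j. f q \<le> f (w j)" using w[OF j] by auto
    have "1 \<le> w j" "w j \<le> n" using wS Nn by (auto simp: S_def)
    moreover have "\<not> strictly_below d (x (w j)) (x i)" if i: "i \<in> {1..n}" for i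
    proof
      assume sb: "strictly_below d (x (w j)) (x i)"
      have lt0: "x (w j) 0 < x i 0" and lt1: "x (w j) 1 < x i 1"
        using sb d by (auto simp: strictly_below_def)
      have wA: "pt (w j) \<in> Aset H T j" using wS by (simp add: S_def)
      show False
      proof (cases "x i 0 \<le> (real j + 1) * H")
        case True
        then have iA: "pt i \<in> Aset H T j" using wA lt0 lt1 by (auto simp: Aset_def pt_def)
        show False
        proof (cases "i \<le> N")
          case True
          then have "i \<in> S j" using iA i by (auto simp: S_def)
          then have "f i \<le> f (w j)" using wmax by auto
          then show False using lt0 lt1 by (simp add: f_def)
        next
          case False
          then have "i \<in> {N<..M}" using i nM by auto
          then show False using iA j by (auto simp: Good_def)
        qed
      next
        case False
        then have "pt i \<in> Rset H T j" using wA lt0 lt1 by (auto simp: Aset_def Rset_def pt_def)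
        moreover have "i \<in> {1..M}" using i nM by auto
        ultimately show False using j by (auto simp: Good_def)
      qed
    qed
    ultimately show ?thesis by (auto simp: current_record_def)
  qed
  have inj: "inj_on w Good"
  proof
    fix j j' assume jj: "j \<in> Good" "j' \<in> Good" "w j = w j'"
    have "pt (w j) \<in> Aset H T j" using w[OF jj(1)] by (simp add: S_def)
    moreover have "pt (w j') \<in> Aset H T j'" using w[OF jj(2)] by (simp add: S_def)
    ultimately show "j = j'" using \<open>w j = w j'\<close> Aset_disj[OF H] by metis
  qed
  have "card Good \<le> card {k. current_record d x n k}"
    by (rule card_inj_on_le[OF inj]) (use rec finite_records in auto)
  then show ?thesis by (simp add: num_records_def)
qed

lemma cert_count:
  fixes x :: "nat \<Rightarrow> nat \<Rightarrow> real" and T H :: real and KK N M :: nat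
  assumes H: "H > 0"
  defines "pt \<equiv> \<lambda>q. (x q 0, x q 1)"
  defines "Good \<equiv> {j. j < KK \<and> (\<exists>q\<in>{1..N}. pt q \<in> Aset H T j) \<and> (\<forall>q\<in>{N<..M}. pt q \<notin> Aset H T j)
       \<and> (\<forall>q\<in>{1..M}. pt q \<notin> Rset H T j)}"
  shows "KK \<le> card Good + card {j. j < KK \<and> (\<forall>q\<in>{1..N}. pt q \<notin> Aset H T j)}
     + card {q\<in>{N<..M}. pt q \<in> (\<Union>j<KK. Aset H T j)}
     + (\<Sum>q\<in>{1..M}. card {j. j < KK \<and> pt q \<in> Rset H T j})"
proof -
  define E where "E = {j. j < KK \<and> (\<forall>q\<in>{1..N}. pt q \<notin> Aset H T j)}"
  define LB where "LB = {j. j < KK \<and> (\<exists>q\<in>{N<..M}. pt q \<in> Aset H T j)}"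
  define GB where "GB = {j. j < KK \<and> (\<exists>q\<in>{1..M}. pt q \<in> Rset H T j)}"
  have sub: "{..<KK} \<subseteq> Good \<union> E \<union> LB \<union> GB"
    by (auto simp: Good_def E_def LB_def GB_def)
  have "KK = card {..<KK}" by simp
  also have "\<dots> \<le> card (Good \<union> E \<union> LB \<union> GB)"
  proof (rule card_mono[OF _ sub])
    have "Good \<union> E \<union> LB \<union> GB \<subseteq> {..<KK}" unfolding Good_def E_def LB_def GB_def by blast
    then show "finite (Good \<union> E \<union> LB \<union> GB)" using finite_subset by blast
  qed
  finally have 0: "KK \<le> card (Good \<union> E \<union> LB \<union> GB)" .
  have "card (Good \<union> E \<union> LB \<union> GB) \<le> card (Good \<union> E \<union> LB) + card GB" by (rule card_Un_le)
  moreover have "card (Good \<union> E \<union> LB) \<le> card (Good \<union> E) + card LB" by (rule card_Un_le)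
  moreover have "card (Good \<union> E) \<le> card Good + card E" by (rule card_Un_le)
  ultimately have 1: "KK \<le> card Good + card E + card LB + card GB" using 0 by linarith
  have "\<exists>q. q \<in> {N<..M} \<and> pt q \<in> Aset H T j" if "j \<in> LB" for j using that by (auto simp: LB_def)
  then obtain g where g: "\<And>j. j \<in> LB \<Longrightarrow> g j \<in> {N<..M} \<and> pt (g j) \<in> Aset H T j" by metis
  have injg: "inj_on g LB"
  proof
    fix j j' assume "j \<in> LB" "j' \<in> LB" "g j = g j'"
    then show "j = j'" using g Aset_disj[OF H] by metis
  qed
  have 2: "card LB \<le> card {q\<in>{N<..M}. pt q \<in> (\<Union>j<KK. Aset H T j)}"
    by (rule card_inj_on_le[OF injg]) (use g in \<open>auto simp: LB_def\<close>)
  have "GB = (\<Union>q\<in>{1..M}. {j. j < KK \<and> pt q \<in> Rset H T j})" by (auto simp: GB_def)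
  then have 3: "card GB \<le> (\<Sum>q\<in>{1..M}. card {j. j < KK \<and> pt q \<in> Rset H T j})"
    using card_UN_le[of "{1..M}" "\<lambda>q. {j. j < KK \<and> pt q \<in> Rset H T j}"] by simp
  show ?thesis using 1 2 3 unfolding E_def by linarith
qed

locale recsetup = prob_space M for M :: "'a measure" +
  fixes X :: "nat \<Rightarrow> nat \<Rightarrow> 'a \<Rightarrow> real" and d :: nat
  assumes d2: "d \<ge> 2"
    and indep: "indep_vars (\<lambda>_. borel) (\<lambda>(k, j). X k j) ({1..} \<times> {..<d})"
    and expo: "\<And>k j. k \<ge> 1 \<Longrightarrow> j < d \<Longrightarrow> distributed M lborel (X k j) (exponential_density 1)"
begin

definition pt :: "nat \<Rightarrow> 'a \<Rightarrow> real \<times> real" where "pt q \<omega> = (X q 0 \<omega>, X q 1 \<omega>)"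

lemma rvX: "k \<ge> 1 \<Longrightarrow> j < d \<Longrightarrow> X k j \<in> borel_measurable M"
  using indep unfolding indep_vars_def by force

lemma rvX0: "q \<ge> 1 \<Longrightarrow> X q 0 \<in> borel_measurable M" using rvX d2 by auto
lemma rvX1: "q \<ge> 1 \<Longrightarrow> X q 1 \<in> borel_measurable M" using rvX d2 by auto

lemma rv_pt: "q \<ge> 1 \<Longrightarrow> pt q \<in> borel_measurable M"
  unfolding pt_def using rvX0 rvX1 by (intro borel_measurable_Pair) auto

lemma indep_pts:
  fixes f :: "nat \<Rightarrow> real \<times> real \<Rightarrow> real"
  assumes meas: "\<And>q. f q \<in> borel_measurable borel"
  shows "indep_vars (\<lambda>_. borel) (\<lambda>q \<omega>. f q (pt q \<omega>)) {1..}"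
proof -
  define K where "K q = {(q,0::nat),(q,1)}" for q::nat
  have 1: "indep_vars (\<lambda>q. PiM (K q) (\<lambda>_. borel)) (\<lambda>q \<omega>. restrict (\<lambda>i. (\<lambda>(k,j). X k j) i \<omega>) (K q)) {1..}"
    by (rule indep_vars_restrict[OF indep]) (use d2 in \<open>auto simp: K_def disjoint_family_on_def\<close>)
  have 2: "(\<lambda>v. f q (v (q,0), v (q,1))) \<in> measurable (PiM (K q) (\<lambda>_. borel)) borel" for q
  proof -
    have "(\<lambda>v. (v (q,0), v (q,1))) \<in> measurable (PiM (K q) (\<lambda>_. borel)) (borel \<Otimes>\<^sub>M borel)"
      by (intro measurable_Pair measurable_component_singleton) (auto simp: K_def)
    have "(\<lambda>v. (v (q,0), v (q,1))) \<in> measurable (PiM (K q) (\<lambda>_. borel)) (borel :: (real \<times> real) measure)"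
      by (intro borel_measurable_Pair measurable_component_singleton) (auto simp: K_def)
    from measurable_compose[OF this meas] show ?thesis by (simp add: o_def)
  qed
  have "indep_vars (\<lambda>_. borel) (\<lambda>q \<omega>. (\<lambda>v. f q (v (q,0), v (q,1))) (restrict (\<lambda>i. (\<lambda>(k,j). X k j) i \<omega>) (K q))) {1..}"
    by (rule indep_vars_compose2[OF 1 2])
  then show ?thesis by (simp add: K_def pt_def)
qed

lemma prob_pair:
  assumes q: "q \<ge> 1" and A: "A \<in> sets borel" and B: "B \<in> sets borel"
  shows "prob {\<omega>\<in>space M. X q 0 \<omega> \<in> A \<and> X q 1 \<omega> \<in> B} =
         prob {\<omega>\<in>space M. X q 0 \<omega> \<in> A} * prob {\<omega>\<in>space M. X q 1 \<omega> \<in> B}"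
proof -
  define A' where "A' = (\<lambda>(k::nat, j::nat). if j = 0 then A else B)"
  have "prob (\<Inter>i\<in>{(q,0),(q,1)}. (\<lambda>(k, j). X k j) i -` A' i \<inter> space M)
     = (\<Prod>i\<in>{(q,0),(q,1)}. prob ((\<lambda>(k, j). X k j) i -` A' i \<inter> space M))"
    by (rule indep_varsD[OF indep]) (use q d2 A B in \<open>auto simp: A'_def\<close>)
  moreover have "(\<Inter>i\<in>{(q,0),(q,1)}. (\<lambda>(k, j). X k j) i -` A' i \<inter> space M) = {\<omega>\<in>space M. X q 0 \<omega> \<in> A \<and> X q 1 \<omega> \<in> B}"
    by (auto simp: A'_def)
  moreover have "(\<Prod>i\<in>{(q,0),(q,1)}. prob ((\<lambda>(k, j). X k j) i -` A' i \<inter> space M)) =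
      prob {\<omega>\<in>space M. X q 0 \<omega> \<in> A} * prob {\<omega>\<in>space M. X q 1 \<omega> \<in> B}"
    by (simp add: A'_def vimage_def Int_def conj_commute)
  ultimately show ?thesis by simp
qed

lemma prob_gt:
  assumes "k \<ge> 1" "j < d" "0 \<le> a"
  shows "prob {\<omega>\<in>space M. X k j \<omega> \<in> {a<..}} = exp (- a)"
  using exponential_distributedD_gt[OF expo[OF assms(1,2)] assms(3)] by simp

lemma prob_ioc:
  assumes "k \<ge> 1" "j < d" "0 \<le> a" "a \<le> b"
  shows "prob {\<omega>\<in>space M. X k j \<omega> \<in> {a<..b}} = exp (- a) - exp (- b)"
proof -
  have m: "X k j \<in> borel_measurable M" using rvX assms by auto
  have "{\<omega>\<in>space M. X k j \<omega> \<in> {a<..b}} = {\<omega>\<in>space M. X k j \<omega> \<in> {a<..}} - {\<omega>\<in>space M. X k j \<omega> \<in> {b<..}}"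
    by auto
  also have "prob \<dots> = prob {\<omega>\<in>space M. X k j \<omega> \<in> {a<..}} - prob {\<omega>\<in>space M. X k j \<omega> \<in> {b<..}}"
    by (rule finite_measure_Diff) (use m assms in \<open>auto\<close>)
  finally show ?thesis using prob_gt assms by simp
qed

lemma prob_A:
  assumes q: "q \<ge> 1" and H: "H > 0" and jT: "real j * H \<le> T"
  shows "prob {\<omega>\<in>space M. pt q \<omega> \<in> Aset H T j} = exp (- T) * (1 - exp (- H))"
proof -
  have e1: "{\<omega>\<in>space M. pt q \<omega> \<in> Aset H T j} = {\<omega>\<in>space M. X q 0 \<omega> \<in> {real j * H<..(real j+1)*H} \<and> X q 1 \<omega> \<in> {T - real j * H<..}}"
    by (auto simp: pt_def Aset_def)
  have e2: "prob {\<omega>\<in>space M. X q 0 \<omega> \<in> {real j * H<..(real j+1)*H} \<and> X q 1 \<omega> \<in> {T - real j * H<..}} = prob {\<omega>\<in>space M. X q 0 \<omega> \<in> {real j * H<..(real j+1)*H}} * prob {\<omega>\<in>space M. X q 1 \<omega> \<in> {T - real j * H<..}}"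
    by (rule prob_pair[OF q]) auto
  have d0: "0 < d" using d2 by simp
  have h0: "0 \<le> real j * H" using H by simp
  have h1: "real j * H \<le> (real j + 1) * H" using H by (simp add: distrib_right)
  have e3: "prob {\<omega>\<in>space M. X q 0 \<omega> \<in> {real j * H<..(real j+1)*H}} = exp (- (real j * H)) - exp (- ((real j + 1) * H))"
    using prob_ioc[OF q d0 h0 h1] .
  have h2: "0 \<le> T - real j * H" using jT by simp
  have d1: "1 < d" using d2 by simp
  have e4: "prob {\<omega>\<in>space M. X q 1 \<omega> \<in> {T - real j * H<..}} = exp (- (T - real j * H))"
    using prob_gt[OF q d1 h2] .
  have e5: "(exp (- (real j * H)) - exp (- ((real j + 1) * H))) * exp (- (T - real j * H)) = exp (- T) * (1 - exp (- H))"
  proof -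
    have a1: "- (real j * H) + - (T - real j * H) = - T" by simp
    have a2: "- ((real j + 1) * H) + - (T - real j * H) = - T + - H" by (simp add: distrib_right)
    have "(exp (- (real j * H)) - exp (- ((real j + 1) * H))) * exp (- (T - real j * H)) = exp (- (real j * H) + - (T - real j * H)) - exp (- ((real j + 1) * H) + - (T - real j * H))"
      by (simp only: left_diff_distrib exp_add)
    also have "\<dots> = exp (- T) - exp (- T + - H)" by (simp only: a1 a2)
    also have "\<dots> = exp (- T) * (1 - exp (- H))"
      by (simp only: exp_add right_diff_distrib mult_1_right)
    finally show ?thesis .
  qed
  show ?thesis by (simp only: e1 e2 e3 e4 e5)
qed

lemma prob_RR:
  assumes q: "q \<ge> 1" and H: "H > 0" and jT: "real j * H \<le> T"
  shows "prob {\<omega>\<in>space M. pt q \<omega> \<in> Rset H T j \<inter> Rset H T (j + s)} = exp (- T - (real s + 1) * H)"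
proof -
  have "{\<omega>\<in>space M. pt q \<omega> \<in> Rset H T j \<inter> Rset H T (j + s)} = {\<omega>\<in>space M. X q 0 \<omega> \<in> {(real (j + s) + 1) * H<..} \<and> X q 1 \<omega> \<in> {T - real j * H<..}}"
  proof -
    have "(real j + 1) * H \<le> (real (j+s) + 1) * H" using H by (intro mult_right_mono) auto
    moreover have "T - real (j+s) * H \<le> T - real j * H" using H by (simp add: mult_right_mono)
    ultimately show ?thesis by (auto simp: pt_def Rset_def)
  qed
  also have "prob \<dots> = prob {\<omega>\<in>space M. X q 0 \<omega> \<in> {(real (j + s) + 1) * H<..}} * prob {\<omega>\<in>space M. X q 1 \<omega> \<in> {T - real j * H<..}}"
    by (rule prob_pair[OF q]) auto
  also have "\<dots> = exp (- ((real (j + s) + 1) * H)) * exp (- (T - real j * H))"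
  proof -
    have "prob {\<omega>\<in>space M. X q 0 \<omega> \<in> {(real (j + s) + 1) * H<..}} = exp (- ((real (j + s) + 1) * H))"
      by (rule prob_gt[OF q]) (use d2 H in simp_all)
    moreover have "prob {\<omega>\<in>space M. X q 1 \<omega> \<in> {T - real j * H<..}} = exp (- (T - real j * H))"
      by (rule prob_gt[OF q]) (use d2 jT in simp_all)
    ultimately show ?thesis by (rule arg_cong2[where f="(*)"])
  qed
  also have "\<dots> = exp (- ((real (j + s) + 1) * H) + - (T - real j * H))"
    by (simp only: exp_add)
  also have "\<dots> = exp (- T - (real s + 1) * H)"
  proof -
    have "- ((real (j + s) + 1) * H) + - (T - real j * H) = - T - (real s + 1) * H"
      by (simp add: algebra_simps)
    then show ?thesis by simp
  qed
  finally show ?thesis .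
qed

end

context recsetup
begin

lemma rv_g:
  assumes "q \<ge> 1" "g \<in> borel_measurable borel"
  shows "(\<lambda>\<omega>. g (pt q \<omega>)) \<in> borel_measurable M"
  using measurable_compose[OF rv_pt[OF assms(1)] assms(2)] by (simp add: o_def)

lemma expect_prod:
  fixes g :: "nat \<Rightarrow> real \<times> real \<Rightarrow> real"
  assumes Q: "finite Q" "Q \<subseteq> {1..}" and meas: "\<And>q. g q \<in> borel_measurable borel"
    and bnd: "\<And>q p. \<bar>g q p\<bar> \<le> B"
  shows "expectation (\<lambda>\<omega>. \<Prod>q\<in>Q. g q (pt q \<omega>)) = (\<Prod>q\<in>Q. expectation (\<lambda>\<omega>. g q (pt q \<omega>)))"
    and "integrable M (\<lambda>\<omega>. \<Prod>q\<in>Q. g q (pt q \<omega>))"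
proof -
  have ind: "indep_vars (\<lambda>_. borel) (\<lambda>q \<omega>. g q (pt q \<omega>)) Q"
    by (rule indep_vars_subset[OF indep_pts[OF meas] Q(2)])
  have int: "integrable M (\<lambda>\<omega>. g q (pt q \<omega>))" if "q \<in> Q" for q
  proof (rule integrable_const_bound[where B=B])
    show "AE x in M. norm (g q (pt q x)) \<le> B" using bnd by simp
    show "(\<lambda>\<omega>. g q (pt q \<omega>)) \<in> borel_measurable M" using rv_g[OF _ meas] that Q by auto
  qed
  show "expectation (\<lambda>\<omega>. \<Prod>q\<in>Q. g q (pt q \<omega>)) = (\<Prod>q\<in>Q. expectation (\<lambda>\<omega>. g q (pt q \<omega>)))"
    by (rule indep_vars_lebesgue_integral[OF Q(1) ind int])
  show "integrable M (\<lambda>\<omega>. \<Prod>q\<in>Q. g q (pt q \<omega>))"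
    by (rule indep_vars_integrable[OF Q(1) ind int])
qed

lemma chernoff:
  fixes g :: "nat \<Rightarrow> real \<times> real \<Rightarrow> real"
  assumes Q: "finite Q" "Q \<subseteq> {1..}" and meas: "\<And>q. g q \<in> borel_measurable borel"
    and bnd: "\<And>q p. 0 \<le> g q p" "\<And>q p. g q p \<le> B"
  shows "prob {\<omega>\<in>space M. a \<le> (\<Sum>q\<in>Q. g q (pt q \<omega>))} \<le> exp (- a) * (\<Prod>q\<in>Q. expectation (\<lambda>\<omega>. exp (g q (pt q \<omega>))))"
proof -
  define A where "A = {\<omega>\<in>space M. a \<le> (\<Sum>q\<in>Q. g q (pt q \<omega>))}"
  have ms: "(\<lambda>\<omega>. \<Sum>q\<in>Q. g q (pt q \<omega>)) \<in> borel_measurable M"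
    by (rule borel_measurable_sum) (use rv_g[OF _ meas] Q in auto)
  have A: "A \<in> sets M" unfolding A_def using ms by measurable
  have measE: "(\<lambda>p. exp (g q p)) \<in> borel_measurable borel" for q using meas by measurable
  have bndE: "\<bar>exp (g q p)\<bar> \<le> exp B" for q p using bnd by simp
  note EP = expect_prod[OF Q measE bndE]
  have "prob A = expectation (indicator A)" using A by simp
  also have "\<dots> \<le> expectation (\<lambda>\<omega>. exp (- a) * (\<Prod>q\<in>Q. exp (g q (pt q \<omega>))))"
  proof (rule Bochner_Integration.integral_mono)
    show "integrable M (indicator A :: 'a \<Rightarrow> real)" using A by (intro integrable_real_indicator) (simp_all add: less_top[symmetric])
    show "integrable M (\<lambda>\<omega>. exp (- a) * (\<Prod>q\<in>Q. exp (g q (pt q \<omega>))))"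
      using EP(2) by simp
    fix \<omega> assume \<omega>: "\<omega> \<in> space M"
    have eq: "exp (- a) * (\<Prod>q\<in>Q. exp (g q (pt q \<omega>))) = exp ((\<Sum>q\<in>Q. g q (pt q \<omega>)) - a)"
      by (simp add: exp_sum[OF Q(1)] exp_diff exp_minus divide_inverse mult.commute)
    show "indicator A \<omega> \<le> exp (- a) * (\<Prod>q\<in>Q. exp (g q (pt q \<omega>)))"
    proof (cases "\<omega> \<in> A")
      case True
      then have "a \<le> (\<Sum>q\<in>Q. g q (pt q \<omega>))" by (simp add: A_def)
      then show ?thesis using True eq by simp
    next
      case False
      then show ?thesis by (simp add: prod_nonneg)
    qed
  qed
  also have "\<dots> = exp (- a) * (\<Prod>q\<in>Q. expectation (\<lambda>\<omega>. exp (g q (pt q \<omega>))))"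
    using EP(1) by simp
  finally show ?thesis by (simp add: A_def)
qed

end

lemma Aset_prod: "Aset H T j = {real j * H<..(real j + 1) * H} \<times> {T - real j * H<..}"
  by (auto simp: Aset_def)
lemma Rset_prod: "Rset H T j = {(real j + 1) * H<..} \<times> {T - real j * H<..}"
  by (auto simp: Rset_def)

lemma prod_borel: "A \<in> sets borel \<Longrightarrow> B \<in> sets borel \<Longrightarrow> (A \<times> B :: (real \<times> real) set) \<in> sets borel"
  by (metis borel_prod pair_measureI)

lemma Aset_borel[measurable]: "Aset H T j \<in> sets borel"
  unfolding Aset_prod by (intro prod_borel) auto
lemma Rset_borel[measurable]: "Rset H T j \<in> sets borel"
  unfolding Rset_prod by (intro prod_borel) auto

context recsetup
begin

lemma ind_meas: "q \<ge> 1 \<Longrightarrow> U \<in> sets borel \<Longrightarrow> (\<lambda>\<omega>. indicator U (pt q \<omega>) :: real) \<in> borel_measurable M"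
  by (rule rv_g) auto

lemma set_meas: "q \<ge> 1 \<Longrightarrow> U \<in> sets borel \<Longrightarrow> {\<omega>\<in>space M. pt q \<omega> \<in> U} \<in> sets M"
  using measurable_sets[OF rv_pt, of q U] by (simp add: vimage_def Int_def conj_commute)

lemma ind_int: "q \<ge> 1 \<Longrightarrow> U \<in> sets borel \<Longrightarrow> integrable M (\<lambda>\<omega>. indicator U (pt q \<omega>) :: real)"
  by (rule integrable_const_bound[where B=1]) (auto intro: ind_meas)

lemma expect_ind:
  assumes "q \<ge> 1" "U \<in> sets borel"
  shows "expectation (\<lambda>\<omega>. indicator U (pt q \<omega>) :: real) = prob {\<omega>\<in>space M. pt q \<omega> \<in> U}"
proof -
  have "expectation (\<lambda>\<omega>. indicator U (pt q \<omega>) :: real) = expectation (indicator {\<omega>\<in>space M. pt q \<omega> \<in> U})"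
    by (rule Bochner_Integration.integral_cong) (auto simp: indicator_def)
  also have "\<dots> = prob ({\<omega>\<in>space M. pt q \<omega> \<in> U} \<inter> space M)" by (rule Bochner_Integration.integral_indicator)
  finally show ?thesis by (simp add: Int_absorb2 subset_iff)
qed

lemma prob_unionA:
  assumes q: "q \<ge> 1" and H: "H > 0" and S: "S \<subseteq> {..<K}" and KT: "real K * H \<le> T"
  shows "prob {\<omega>\<in>space M. pt q \<omega> \<in> (\<Union>j\<in>S. Aset H T j)} = real (card S) * (exp (- T) * (1 - exp (- H)))"
proof -
  have fin: "finite S" using S finite_subset by blast
  have "{\<omega>\<in>space M. pt q \<omega> \<in> (\<Union>j\<in>S. Aset H T j)} = (\<Union>j\<in>S. {\<omega>\<in>space M. pt q \<omega> \<in> Aset H T j})" by auto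
  also have "prob \<dots> = (\<Sum>j\<in>S. prob {\<omega>\<in>space M. pt q \<omega> \<in> Aset H T j})"
  proof (rule measure_finite_Union[OF fin])
    show "(\<lambda>j. {\<omega>\<in>space M. pt q \<omega> \<in> Aset H T j}) ` S \<subseteq> events" using set_meas[OF q] by auto
    show "disjoint_family_on (\<lambda>j. {\<omega>\<in>space M. pt q \<omega> \<in> Aset H T j}) S"
      unfolding disjoint_family_on_def using Aset_disj[OF H] by blast
    show "\<And>i. emeasure M {\<omega>\<in>space M. pt q \<omega> \<in> Aset H T i} \<noteq> \<infinity>" by simp
  qed
  also have "\<dots> = (\<Sum>j\<in>S. exp (- T) * (1 - exp (- H)))"
  proof (rule sum.cong[OF refl])
    fix j assume "j \<in> S"
    then have "real j * H \<le> T" using S KT H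
      by (smt (verit, ccfv_SIG) lessThan_iff mult_right_mono of_nat_less_iff subsetD)
    then show "prob {\<omega>\<in>space M. pt q \<omega> \<in> Aset H T j} = exp (- T) * (1 - exp (- H))"
      by (rule prob_A[OF q H])
  qed
  finally show ?thesis by simp
qed

lemma BE_bound:
  assumes H: "H > 0" and S: "S \<subseteq> {..<K}" and KT: "real K * H \<le> T"
  shows "prob {\<omega>\<in>space M. \<forall>q\<in>{1..N}. pt q \<omega> \<notin> (\<Union>j\<in>S. Aset H T j)}
      \<le> exp (- (real (card S) * (exp (- T) * (1 - exp (- H))) * real N))"
proof -
  define U where "U = (\<Union>j\<in>S. Aset H T j)"
  define m where "m = real (card S) * (exp (- T) * (1 - exp (- H)))"
  have fin: "finite S" using S finite_subset by blast
  have U: "U \<in> sets borel" unfolding U_def using fin by (intro sets.finite_UN) auto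
  have cU: "- U \<in> sets borel" using U by auto
  define E where "E = {\<omega>\<in>space M. \<forall>q\<in>{1..N}. pt q \<omega> \<notin> U}"
  have E: "E \<in> sets M"
  proof -
    have "E = space M \<inter> (\<Inter>q\<in>{1..N}. {\<omega>\<in>space M. pt q \<omega> \<in> - U})" unfolding E_def by auto
    also have "\<dots> \<in> sets M" using set_meas[OF _ cU] by auto
    finally show ?thesis .
  qed
  have "prob E = expectation (indicator E)" using E by simp
  also have "\<dots> = expectation (\<lambda>\<omega>. \<Prod>q\<in>{1..N}. indicator (- U) (pt q \<omega>))"
    by (rule Bochner_Integration.integral_cong) (auto simp: E_def indicator_def)
  also have "\<dots> = (\<Prod>q\<in>{1..N}. expectation (\<lambda>\<omega>. indicator (- U) (pt q \<omega>)))"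
    by (rule expect_prod(1)[where B=1]) (use cU in auto)
  also have "\<dots> \<le> (\<Prod>q\<in>{1..N}. exp (- m))"
  proof (rule prod_mono)
    fix q assume q: "q \<in> {1..N}"
    then have q1: "q \<ge> 1" by simp
    have "expectation (\<lambda>\<omega>. indicator (- U) (pt q \<omega>)) = prob {\<omega>\<in>space M. pt q \<omega> \<in> - U}"
      by (rule expect_ind[OF q1 cU])
    also have "{\<omega>\<in>space M. pt q \<omega> \<in> - U} = space M - {\<omega>\<in>space M. pt q \<omega> \<in> U}" by auto
    also have "prob \<dots> = 1 - prob {\<omega>\<in>space M. pt q \<omega> \<in> U}"
      using prob_compl[OF set_meas[OF q1 U]] by simp
    also have "\<dots> = 1 - m" unfolding U_def m_def by (rule arg_cong[where f="\<lambda>x. 1 - x"], rule prob_unionA[OF q1 H S KT])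
    finally have eq: "expectation (\<lambda>\<omega>. indicator (- U) (pt q \<omega>)) = 1 - m" .
    have "0 \<le> expectation (\<lambda>\<omega>. indicator (- U) (pt q \<omega>) :: real)" by (rule integral_nonneg_AE) auto
    then show "0 \<le> expectation (\<lambda>\<omega>. indicator (- U) (pt q \<omega>) :: real) \<and> expectation (\<lambda>\<omega>. indicator (- U) (pt q \<omega>)) \<le> exp (- m)"
      using eq exp_ge_add_one_self[of "- m"] by simp
  qed
  also have "\<dots> = exp (- m) ^ N" by simp
  also have "\<dots> = exp (- (m * real N))" by (simp add: exp_of_nat_mult[symmetric] mult.commute)
  finally show ?thesis unfolding E_def U_def m_def .
qed

lemma L_factor:
  assumes q: "q \<ge> 1" and U: "U \<in> sets borel"
  shows "expectation (\<lambda>\<omega>. exp (indicator U (pt q \<omega>) :: real)) \<le> 1 + 2 * prob {\<omega>\<in>space M. pt q \<omega> \<in> U}"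
proof -
  have "expectation (\<lambda>\<omega>. exp (indicator U (pt q \<omega>) :: real)) \<le> expectation (\<lambda>\<omega>. 1 + 2 * indicator U (pt q \<omega>) :: real)"
  proof (rule Bochner_Integration.integral_mono)
    show "integrable M (\<lambda>\<omega>. exp (indicator U (pt q \<omega>) :: real))"
    proof (rule integrable_const_bound[where B="exp 1"])
      show "AE x in M. norm (exp (indicator U (pt q x) :: real)) \<le> exp 1" by (auto simp: indicator_def)
      show "(\<lambda>\<omega>. exp (indicator U (pt q \<omega>) :: real)) \<in> borel_measurable M"
        using ind_meas[OF q U] by measurable
    qed
    show "integrable M (\<lambda>\<omega>. 1 + 2 * indicator U (pt q \<omega>) :: real)"
      using ind_int[OF q U] by simp
    fix \<omega>
    have "exp (1::real) \<le> 3" using exp_le by simp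
    then show "exp (indicator U (pt q \<omega>) :: real) \<le> 1 + 2 * indicator U (pt q \<omega>)"
      by (auto simp: indicator_def)
  qed
  also have "\<dots> = 1 + 2 * prob {\<omega>\<in>space M. pt q \<omega> \<in> U}"
    using ind_int[OF q U] expect_ind[OF q U] by (simp add: prob_space)
  finally show ?thesis .
qed

end

lemma G_point:
  fixes p :: "real \<times> real"
  assumes H: "H > 0"
  shows "exp (\<Sum>j<K. indicator (Rset H T j) p) \<le>
    1 + (\<Sum>t\<in>{1..K}. exp (real t) * indicator (\<Union>j<K. Rset H T j \<inter> Rset H T (j + (t - 1))) p)"
proof -
  define J where "J = {..<K} \<inter> {j. p \<in> Rset H T j}"
  have finJ: "finite J" by (simp add: J_def)
  have sumeq: "(\<Sum>j<K. indicator (Rset H T j) p) = real (card J)"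
    by (simp add: indicator_def sum.If_cases J_def)
  have nn: "0 \<le> (\<Sum>t\<in>{1..K}. exp (real t) * indicator (\<Union>j<K. Rset H T j \<inter> Rset H T (j + (t - 1))) p)"
    by (intro sum_nonneg) auto
  show ?thesis
  proof (cases "card J = 0")
    case True
    then show ?thesis using sumeq nn by simp
  next
    case False
    define t where "t = card J"
    have Jne: "J \<noteq> {}" using False by auto
    define u where "u = Min J"
    define v where "v = Max J"
    have uJ: "u \<in> J" using Min_in[OF finJ Jne] by (simp add: u_def)
    have vJ: "v \<in> J" using Max_in[OF finJ Jne] by (simp add: v_def)
    have "J \<subseteq> {u..v}" using Min_le[OF finJ] Max_ge[OF finJ] by (auto simp: u_def v_def)
    then have "card J \<le> card {u..v}" by (intro card_mono) auto
    then have tuv: "u + (t - 1) \<le> v" using False by (simp add: t_def)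
    have tK: "t \<le> K"
    proof -
      have "J \<subseteq> {..<K}" by (auto simp: J_def)
      then have "card J \<le> card {..<K}" by (intro card_mono) auto
      then show ?thesis by (simp add: t_def)
    qed
    have pu: "p \<in> Rset H T u" and pv: "p \<in> Rset H T v" and uK: "u < K"
      using uJ vJ by (auto simp: J_def)
    have "p \<in> Rset H T (u + (t - 1))"
    proof -
      have "real (u + (t - 1)) \<le> real v" using tuv by (simp only: of_nat_le_iff)
      then have le1: "real (u + (t - 1)) + 1 \<le> real v + 1" by simp
      have "(real (u + (t - 1)) + 1) * H \<le> (real v + 1) * H"
        by (rule mult_right_mono[OF le1]) (use H in simp)
      moreover have "T - real (u + (t - 1)) * H \<le> T - real u * H"
        using H by (simp add: mult_right_mono)
      ultimately show ?thesis using pu pv by (auto simp: Rset_def)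
    qed
    then have pV: "p \<in> (\<Union>j<K. Rset H T j \<inter> Rset H T (j + (t - 1)))" using pu uK by auto
    have t1: "t \<in> {1..K}" using False tK by (simp add: t_def)
    have "exp (real t) * indicator (\<Union>j<K. Rset H T j \<inter> Rset H T (j + (t - 1))) p
        \<le> (\<Sum>t\<in>{1..K}. exp (real t) * indicator (\<Union>j<K. Rset H T j \<inter> Rset H T (j + (t - 1))) p)"
      by (rule member_le_sum[OF t1]) auto
    then show ?thesis using pV sumeq by (simp add: t_def)
  qed
qed

context recsetup
begin

lemma G_factor:
  assumes q: "q \<ge> 1" and H: "H > 0" and KT: "real K * H \<le> T"
  shows "expectation (\<lambda>\<omega>. exp (\<Sum>j<K. indicator (Rset H T j) (pt q \<omega>)))
     \<le> 1 + (\<Sum>t\<in>{1..K}. exp (real t) * (real K * exp (- T - real t * H)))"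
proof -
  define V where "V t = (\<Union>j<K. Rset H T j \<inter> Rset H T (j + (t - 1)))" for t
  have V: "V t \<in> sets borel" for t unfolding V_def by measurable
  have intV: "integrable M (\<lambda>\<omega>. indicator (V t) (pt q \<omega>) :: real)" for t by (rule ind_int[OF q V])
  have "expectation (\<lambda>\<omega>. exp (\<Sum>j<K. indicator (Rset H T j) (pt q \<omega>)))
     \<le> expectation (\<lambda>\<omega>. 1 + (\<Sum>t\<in>{1..K}. exp (real t) * indicator (V t) (pt q \<omega>)))"
  proof (rule Bochner_Integration.integral_mono)
    show "integrable M (\<lambda>\<omega>. exp (\<Sum>j<K. indicator (Rset H T j) (pt q \<omega>)) :: real)"
    proof (rule integrable_const_bound[where B="exp (real K)"])
      show "AE x in M. norm (exp (\<Sum>j<K. indicator (Rset H T j) (pt q x)) :: real) \<le> exp (real K)"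
      proof (intro AE_I2)
        fix x
        have "(\<Sum>j<K. indicator (Rset H T j) (pt q x) :: real) \<le> (\<Sum>j<K. 1)"
          by (intro sum_mono) (auto simp: indicator_def)
        then show "norm (exp (\<Sum>j<K. indicator (Rset H T j) (pt q x)) :: real) \<le> exp (real K)" by simp
      qed
      show "(\<lambda>\<omega>. exp (\<Sum>j<K. indicator (Rset H T j) (pt q \<omega>)) :: real) \<in> borel_measurable M"
        using ind_meas[OF q Rset_borel] by measurable
    qed
    show "integrable M (\<lambda>\<omega>. 1 + (\<Sum>t\<in>{1..K}. exp (real t) * indicator (V t) (pt q \<omega>)) :: real)"
      by (intro Bochner_Integration.integrable_add integrable_const Bochner_Integration.integrable_sum
          Bochner_Integration.integrable_mult_right intV)
    fix \<omega>
    show "exp (\<Sum>j<K. indicator (Rset H T j) (pt q \<omega>)) \<le> 1 + (\<Sum>t\<in>{1..K}. exp (real t) * indicator (V t) (pt q \<omega>) :: real)"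
      unfolding V_def by (rule G_point[OF H])
  qed
  also have "\<dots> = 1 + (\<Sum>t\<in>{1..K}. exp (real t) * prob {\<omega>\<in>space M. pt q \<omega> \<in> V t})"
  proof -
    have i1: "integrable M (\<lambda>\<omega>. \<Sum>t\<in>{1..K}. exp (real t) * indicator (V t) (pt q \<omega>) :: real)"
      by (intro Bochner_Integration.integrable_sum Bochner_Integration.integrable_mult_right intV)
    have e1: "expectation (\<lambda>\<omega>. 1 + (\<Sum>t\<in>{1..K}. exp (real t) * indicator (V t) (pt q \<omega>)) :: real)
       = expectation (\<lambda>\<omega>. 1 :: real) + expectation (\<lambda>\<omega>. \<Sum>t\<in>{1..K}. exp (real t) * indicator (V t) (pt q \<omega>) :: real)"
      by (rule Bochner_Integration.integral_add[OF integrable_const i1])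
    have e2: "expectation (\<lambda>\<omega>. 1 :: real) = 1" by (simp add: prob_space)
    have e3: "expectation (\<lambda>\<omega>. \<Sum>t\<in>{1..K}. exp (real t) * indicator (V t) (pt q \<omega>) :: real)
       = (\<Sum>t\<in>{1..K}. expectation (\<lambda>\<omega>. exp (real t) * indicator (V t) (pt q \<omega>) :: real))"
      by (rule Bochner_Integration.integral_sum) (intro Bochner_Integration.integrable_mult_right intV)
    have e4: "expectation (\<lambda>\<omega>. exp (real t) * indicator (V t) (pt q \<omega>) :: real) = exp (real t) * prob {\<omega>\<in>space M. pt q \<omega> \<in> V t}" for t
      using expect_ind[OF q V, of t] by (simp only: Bochner_Integration.integral_mult_right_zero)
    show ?thesis by (simp only: e1 e2 e3 e4)
  qed
  also have "\<dots> \<le> 1 + (\<Sum>t\<in>{1..K}. exp (real t) * (real K * exp (- T - real t * H)))"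
  proof -
    have "prob {\<omega>\<in>space M. pt q \<omega> \<in> V t} \<le> real K * exp (- T - real t * H)" if t: "t \<in> {1..K}" for t
    proof -
      have "{\<omega>\<in>space M. pt q \<omega> \<in> V t} = (\<Union>j<K. {\<omega>\<in>space M. pt q \<omega> \<in> Rset H T j \<inter> Rset H T (j + (t - 1))})"
        unfolding V_def by auto
      also have "prob \<dots> \<le> (\<Sum>j<K. prob {\<omega>\<in>space M. pt q \<omega> \<in> Rset H T j \<inter> Rset H T (j + (t - 1))})"
        by (rule measure_UNION_le) (use set_meas[OF q] in auto)
      also have "\<dots> = (\<Sum>j<K. exp (- T - real t * H))"
      proof (rule sum.cong[OF refl])
        fix j assume "j \<in> {..<K}"
        then have "real j * H \<le> T" using KT H
          by (smt (verit, ccfv_SIG) lessThan_iff mult_right_mono of_nat_less_iff)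
        from prob_RR[OF q H this, of "t - 1"] t
        show "prob {\<omega>\<in>space M. pt q \<omega> \<in> Rset H T j \<inter> Rset H T (j + (t - 1))} = exp (- T - real t * H)"
          by (simp add: of_nat_diff)
      qed
      finally show ?thesis by simp
    qed
    then show ?thesis by (intro add_left_mono sum_mono mult_left_mono) auto
  qed
  finally show ?thesis .
qed

end

lemma geom_id: "(1 - r) * (\<Sum>t\<in>{1..K}. r ^ t) = r - r ^ (K + 1)" for r :: real
proof (induction K)
  case 0 then show ?case by simp
next
  case (Suc K)
  have "(\<Sum>t\<in>{1..Suc K}. r ^ t) = (\<Sum>t\<in>{1..K}. r ^ t) + r ^ (Suc K)" by simp
  then have "(1 - r) * (\<Sum>t\<in>{1..Suc K}. r ^ t) = (1 - r) * (\<Sum>t\<in>{1..K}. r ^ t) + (1 - r) * r ^ (Suc K)"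
    by (simp add: distrib_left)
  also have "\<dots> = r - r ^ (K + 1) + (r ^ (Suc K) - r ^ (Suc (Suc K)))"
    using Suc.IH by (simp add: left_diff_distrib)
  finally show ?case by simp
qed

lemma geom_le: fixes r :: real assumes "0 \<le> r" "r < 1" shows "(\<Sum>t\<in>{1..K}. r ^ t) \<le> r / (1 - r)"
proof -
  have "(1 - r) * (\<Sum>t\<in>{1..K}. r ^ t) \<le> r" using geom_id[of r K] assms by simp
  then show ?thesis using assms by (simp add: field_simps mult.commute)
qed

lemma exp1_ge2: "2 \<le> exp (1::real)" using exp_ge_add_one_self[of 1] by simp

lemma exp_nat_ge: "2 ^ n \<le> exp (real n)"
proof -
  have "(2::real) ^ n \<le> exp 1 ^ n" by (rule power_mono[OF exp1_ge2]) auto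
  also have "\<dots> = exp (real n)" by (simp add: exp_of_nat_mult[symmetric])
  finally show ?thesis .
qed

lemma exp_m9: "exp (- 9 :: real) \<le> 1/2"
proof -
  have "2 ^ 9 \<le> exp (real (9::nat))" by (rule exp_nat_ge)
  then have "2 \<le> exp (9::real)" by simp
  then show ?thesis by (simp add: exp_minus field_simps)
qed

lemma exp_m8: "exp (- 8 :: real) \<le> 1/256"
proof -
  have "2 ^ 8 \<le> exp (real (8::nat))" by (rule exp_nat_ge)
  then have "256 \<le> exp (8::real)" by simp
  then show ?thesis by (simp add: exp_minus field_simps)
qed

lemma ln2_le1: "ln (2::real) \<le> 1" using ln_le_minus_one[of 2] by simp

context recsetup
begin

lemma expT: assumes "N > 0" "T = ln (real N / 16)" shows "exp (- T) = 16 / real N"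
  using assms by (simp add: exp_minus)

lemma prob_BE_gen:
  assumes N: "N \<ge> 512" and T: "T = ln (real N / 16)" and KT: "real K * 9 \<le> T" and b: "real K / 4 \<le> real b"
  shows "prob (\<Union>S\<in>{S. S \<subseteq> {..<K} \<and> card S = b}. {\<omega>\<in>space M. \<forall>q\<in>{1..N}. pt q \<omega> \<notin> (\<Union>j\<in>S. Aset 9 T j)}) \<le> exp (- real K)"
proof -
  define SS where "SS = {S. S \<subseteq> {..<K} \<and> card S = b}"
  have finSS: "finite SS" unfolding SS_def by (rule finite_subset[of _ "Pow {..<K}"]) auto
  have meas: "{\<omega>\<in>space M. \<forall>q\<in>{1..N}. pt q \<omega> \<notin> (\<Union>j\<in>S. Aset 9 T j)} \<in> sets M" if "S \<in> SS" for S
  proof -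
    have fin: "finite S" using that unfolding SS_def by (auto intro: finite_subset)
    define U where "U = (\<Union>j\<in>S. Aset 9 T j)"
    have U: "U \<in> sets borel" unfolding U_def using fin by (intro sets.finite_UN) auto
    have cU: "- U \<in> sets borel" using U by auto
    have "{\<omega>\<in>space M. \<forall>q\<in>{1..N}. pt q \<omega> \<notin> U} = space M \<inter> (\<Inter>q\<in>{1..N}. {\<omega>\<in>space M. pt q \<omega> \<in> - U})"
      by auto
    also have "\<dots> \<in> sets M" using set_meas[OF _ cU] by auto
    finally show ?thesis unfolding U_def .
  qed
  have eT: "exp (- T) = 16 / real N" using expT[of N T] N T by simp
  have m: "2 * real K \<le> real b * (exp (- T) * (1 - exp (- 9))) * real N"
  proof -
    have "real b * (exp (- T) * (1 - exp (- 9))) * real N = 16 * real b * (1 - exp (- 9))"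
      using eT N by simp
    moreover have "1/2 \<le> 1 - exp (- 9 :: real)" using exp_m9 by simp
    then have "16 * real b * (1/2) \<le> 16 * real b * (1 - exp (- 9))" by (intro mult_left_mono) auto
    ultimately show ?thesis using b by linarith
  qed
  have "prob (\<Union>S\<in>SS. {\<omega>\<in>space M. \<forall>q\<in>{1..N}. pt q \<omega> \<notin> (\<Union>j\<in>S. Aset 9 T j)})
      \<le> (\<Sum>S\<in>SS. prob {\<omega>\<in>space M. \<forall>q\<in>{1..N}. pt q \<omega> \<notin> (\<Union>j\<in>S. Aset 9 T j)})"
    by (rule measure_UNION_le[OF finSS meas])
  also have "\<dots> \<le> (\<Sum>S\<in>SS. exp (- (2 * real K)))"
  proof (rule sum_mono)
    fix S assume S: "S \<in> SS"
    have "prob {\<omega>\<in>space M. \<forall>q\<in>{1..N}. pt q \<omega> \<notin> (\<Union>j\<in>S. Aset 9 T j)}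
        \<le> exp (- (real (card S) * (exp (- T) * (1 - exp (- 9))) * real N))"
      by (rule BE_bound) (use S KT in \<open>auto simp: SS_def\<close>)
    also have "\<dots> \<le> exp (- (2 * real K))" using m S by (simp add: SS_def)
    finally show "prob {\<omega>\<in>space M. \<forall>q\<in>{1..N}. pt q \<omega> \<notin> (\<Union>j\<in>S. Aset 9 T j)} \<le> exp (- (2 * real K))" .
  qed
  also have "\<dots> = real (card SS) * exp (- (2 * real K))" by simp
  also have "\<dots> \<le> 2 ^ K * exp (- (2 * real K))"
  proof -
    have "card SS = K choose b" unfolding SS_def using n_subsets[of "{..<K}" b] by simp
    also have "\<dots> \<le> 2 ^ K" by (rule binomial_le_pow2)
    finally have "real (card SS) \<le> 2 ^ K" by (metis of_nat_le_iff of_nat_numeral of_nat_power)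
    then show ?thesis by (intro mult_right_mono) auto
  qed
  also have "\<dots> \<le> exp (real K) * exp (- (2 * real K))"
  proof -
    have "(2::real) ^ K = exp (real K * ln 2)" by (simp add: exp_of_nat_mult)
    also have "\<dots> \<le> exp (real K)" using ln2_le1 by (simp add: mult_left_le)
    finally show ?thesis by (intro mult_right_mono) auto
  qed
  also have "\<dots> = exp (- real K)" by (simp flip: exp_add)
  finally show ?thesis unfolding SS_def .
qed

end

context recsetup
begin

lemma prod_const_le:
  fixes f :: "nat \<Rightarrow> real"
  assumes "finite Q" "\<And>q. q \<in> Q \<Longrightarrow> 0 \<le> f q \<and> f q \<le> exp c" "0 \<le> c"
  shows "(\<Prod>q\<in>Q. f q) \<le> exp (real (card Q) * c)"
proof -
  have "(\<Prod>q\<in>Q. f q) \<le> (\<Prod>q\<in>Q. exp c)" by (rule prod_mono) (use assms in auto)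
  also have "\<dots> = exp (real (card Q) * c)" by (simp add: exp_of_nat_mult)
  finally show ?thesis .
qed

lemma prob_BL_gen:
  assumes N: "N \<ge> 512" and T: "T = ln (real N / 16)" and KT: "real K * 9 \<le> T"
    and Mb: "real Mb \<le> real N + real N / 256"
  shows "prob {\<omega>\<in>space M. real K / 4 \<le> (\<Sum>q\<in>{N<..Mb}. indicator (\<Union>j<K. Aset 9 T j) (pt q \<omega>))} \<le> exp (- (real K / 8))"
proof -
  define U where "U = (\<Union>j<K. Aset 9 T j)"
  have U: "U \<in> sets borel" unfolding U_def by measurable
  have eT: "exp (- T) = 16 / real N" using expT[of N T] N T by simp
  have Q: "finite {N<..Mb}" "{N<..Mb} \<subseteq> {1..}" by auto
  have "prob {\<omega>\<in>space M. real K / 4 \<le> (\<Sum>q\<in>{N<..Mb}. indicator U (pt q \<omega>))}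
     \<le> exp (- (real K / 4)) * (\<Prod>q\<in>{N<..Mb}. expectation (\<lambda>\<omega>. exp (indicator U (pt q \<omega>) :: real)))"
    by (rule chernoff[OF Q, where B=1]) (use U in auto)
  also have "(\<Prod>q\<in>{N<..Mb}. expectation (\<lambda>\<omega>. exp (indicator U (pt q \<omega>) :: real))) \<le> exp (real (card {N<..Mb}) * (32 * real K / real N))"
  proof (rule prod_const_le)
    fix q assume q: "q \<in> {N<..Mb}"
    then have q1: "q \<ge> 1" by simp
    have "0 \<le> expectation (\<lambda>\<omega>. exp (indicator U (pt q \<omega>) :: real))" by (rule integral_nonneg_AE) auto
    moreover have "expectation (\<lambda>\<omega>. exp (indicator U (pt q \<omega>) :: real)) \<le> 1 + 2 * prob {\<omega>\<in>space M. pt q \<omega> \<in> U}"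
      by (rule L_factor[OF q1 U])
    moreover have "prob {\<omega>\<in>space M. pt q \<omega> \<in> U} = real K * (exp (- T) * (1 - exp (- 9)))"
      unfolding U_def using prob_unionA[OF q1, of 9 "{..<K}" K T] KT by simp
    moreover have "real K * (exp (- T) * (1 - exp (- 9))) \<le> real K * (16 / real N)"
    proof -
      have "exp (- T) * (1 - exp (- 9)) \<le> exp (- T)" using mult_left_mono[of "1 - exp (- 9)" 1 "exp (- T)"] by simp
      then show ?thesis using eT by (intro mult_left_mono) auto
    qed
    moreover have ex: "1 + 32 * real K / real N \<le> exp (32 * real K / real N)" by (rule exp_ge_add_one_self)
    moreover have "2 * (real K * (16 / real N)) = 32 * real K / real N" by simp
    ultimately show "0 \<le> expectation (\<lambda>\<omega>. exp (indicator U (pt q \<omega>) :: real)) \<and>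
       expectation (\<lambda>\<omega>. exp (indicator U (pt q \<omega>) :: real)) \<le> exp (32 * real K / real N)"
      by linarith
  qed auto
  also have "real (card {N<..Mb}) * (32 * real K / real N) \<le> real K / 8"
  proof -
    have "real (card {N<..Mb}) \<le> real N / 256" using Mb by (cases "N \<le> Mb") (auto simp: of_nat_diff)
    then have "real (card {N<..Mb}) * (32 * real K / real N) \<le> real N / 256 * (32 * real K / real N)"
      by (intro mult_right_mono) auto
    also have "\<dots> = real K / 8" using N by (simp add: field_simps)
    finally show ?thesis .
  qed
  finally have "prob {\<omega>\<in>space M. real K / 4 \<le> (\<Sum>q\<in>{N<..Mb}. indicator U (pt q \<omega>))} \<le> exp (- (real K / 4)) * exp (real K / 8)"
    by simp
  also have "\<dots> = exp (- (real K / 8))" by (simp flip: exp_add)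
  finally show ?thesis unfolding U_def .
qed

end

context recsetup
begin

lemma prob_BG_gen:
  assumes N: "N \<ge> 512" and T: "T = ln (real N / 16)" and KT: "real K * 9 \<le> T"
    and Mb: "real Mb \<le> 2 * real N"
  shows "prob {\<omega>\<in>space M. real K / 4 \<le> (\<Sum>q\<in>{1..Mb}. (\<Sum>j<K. indicator (Rset 9 T j) (pt q \<omega>)))} \<le> exp (- (real K / 9))"
proof -
  define g where "g q p = (\<Sum>j<K. indicator (Rset 9 T j) p :: real)" for q :: nat and p
  have eT: "exp (- T) = 16 / real N" using expT[of N T] N T by simp
  have Q: "finite {1..Mb}" "{1..Mb} \<subseteq> {1..}" by auto
  have gm: "g q \<in> borel_measurable borel" for q unfolding g_def by measurable
  have g0: "0 \<le> g q p" for q p unfolding g_def by (intro sum_nonneg) auto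
  have gB: "g q p \<le> real K" for q p
  proof -
    have "g q p \<le> (\<Sum>j<K. 1)" unfolding g_def by (intro sum_mono) (auto simp: indicator_def)
    then show ?thesis by simp
  qed
  have "prob {\<omega>\<in>space M. real K / 4 \<le> (\<Sum>q\<in>{1..Mb}. g q (pt q \<omega>))}
     \<le> exp (- (real K / 4)) * (\<Prod>q\<in>{1..Mb}. expectation (\<lambda>\<omega>. exp (g q (pt q \<omega>))))"
    by (rule chernoff[OF Q gm g0 gB])
  also have "(\<Prod>q\<in>{1..Mb}. expectation (\<lambda>\<omega>. exp (g q (pt q \<omega>)))) \<le> exp (real (card {1..Mb}) * (16 * real K / (255 * real N)))"
  proof (rule prod_const_le)
    fix q assume q: "q \<in> {1..Mb}"
    then have q1: "q \<ge> 1" by simp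
    have "0 \<le> expectation (\<lambda>\<omega>. exp (g q (pt q \<omega>)))" by (rule integral_nonneg_AE) auto
    moreover have "expectation (\<lambda>\<omega>. exp (g q (pt q \<omega>))) \<le> 1 + (\<Sum>t\<in>{1..K}. exp (real t) * (real K * exp (- T - real t * 9)))"
      unfolding g_def by (rule G_factor[OF q1]) (use KT in auto)
    moreover have "(\<Sum>t\<in>{1..K}. exp (real t) * (real K * exp (- T - real t * 9))) \<le> 16 * real K / (255 * real N)"
    proof -
      have "(\<Sum>t\<in>{1..K}. exp (real t) * (real K * exp (- T - real t * 9))) = real K * exp (- T) * (\<Sum>t\<in>{1..K}. exp (- 8) ^ t)"
      proof -
        have pteq: "exp (real t) * (real K * exp (- T - real t * 9)) = real K * exp (- T) * exp (- 8) ^ t" for t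
        proof -
          have "exp (real t) * exp (- T - real t * 9) = exp (- T) * exp (real t * (- 8))"
            by (simp only: exp_add[symmetric]) (simp add: algebra_simps)
          also have "exp (real t * (- 8)) = exp (- 8) ^ t" by (rule exp_of_nat_mult)
          finally show ?thesis by (simp add: algebra_simps)
        qed
        show ?thesis unfolding sum_distrib_left by (rule sum.cong[OF refl]) (rule pteq)
      qed
      also have "\<dots> \<le> real K * exp (- T) * (1 / 255)"
      proof (rule mult_left_mono)
        have r: "0 \<le> exp (- 8 :: real)" "exp (- 8 :: real) < 1" using exp_m8 by auto
        have "(\<Sum>t\<in>{1..K}. exp (- 8) ^ t) \<le> exp (- 8) / (1 - exp (- 8 :: real))" by (rule geom_le[OF r])
        also have "\<dots> \<le> (1/256) / (1 - 1/256)"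
          using exp_m8 r by (intro frac_le) auto
        finally show "(\<Sum>t\<in>{1..K}. exp (- 8 :: real) ^ t) \<le> 1 / 255" by simp
      qed simp
      also have "\<dots> = 16 * real K / (255 * real N)" using eT by simp
      finally show ?thesis .
    qed
    moreover have ex: "1 + 16 * real K / (255 * real N) \<le> exp (16 * real K / (255 * real N))" by (rule exp_ge_add_one_self)
    ultimately show "0 \<le> expectation (\<lambda>\<omega>. exp (g q (pt q \<omega>))) \<and>
       expectation (\<lambda>\<omega>. exp (g q (pt q \<omega>))) \<le> exp (16 * real K / (255 * real N))"
      by linarith
  qed auto
  also have "real (card {1..Mb}) * (16 * real K / (255 * real N)) \<le> 32 * real K / 255"
  proof -
    have "real (card {1..Mb}) * (16 * real K / (255 * real N)) \<le> (2 * real N) * (16 * real K / (255 * real N))"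
      using Mb by (intro mult_right_mono) auto
    also have "\<dots> = 32 * real K / 255" using N by (simp add: field_simps)
    finally show ?thesis .
  qed
  finally have "prob {\<omega>\<in>space M. real K / 4 \<le> (\<Sum>q\<in>{1..Mb}. g q (pt q \<omega>))} \<le> exp (- (real K / 4)) * exp (32 * real K / 255)"
    by simp
  also have "\<dots> = exp (- (real K / 4) + 32 * real K / 255)" by (simp flip: exp_add)
  also have "\<dots> \<le> exp (- (real K / 9))" by simp
  finally show ?thesis unfolding g_def .
qed

end

definition cb :: real where "cb = 513/512"
definition Nb :: "nat \<Rightarrow> nat" where "Nb i = nat \<lceil>cb ^ i\<rceil>"
definition Tb :: "nat \<Rightarrow> real" where "Tb i = ln (real (Nb i) / 16)"
definition Kb :: "nat \<Rightarrow> nat" where "Kb i = nat \<lfloor>Tb i / 9\<rfloor>"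
definition bb :: "nat \<Rightarrow> nat" where "bb i = nat \<lceil>real (Kb i) / 4\<rceil>"

lemma cb_gt1: "cb > 1" by (simp add: cb_def)

lemma Nb_ge: "cb ^ i \<le> real (Nb i)"
proof -
  have "0 \<le> cb ^ i" by (simp add: cb_def)
  then show ?thesis unfolding Nb_def by linarith
qed

lemma Nb_lt: "real (Nb i) < cb ^ i + 1"
proof -
  have "0 \<le> cb ^ i" by (simp add: cb_def)
  then show ?thesis unfolding Nb_def by linarith
qed

lemma Nb_mono: "i \<le> j \<Longrightarrow> Nb i \<le> Nb j"
proof -
  assume "i \<le> j"
  then have "cb ^ i \<le> cb ^ j" using cb_gt1 by (intro power_increasing) auto
  then show ?thesis unfolding Nb_def by (intro nat_mono ceiling_mono)
qed

lemma Nb_Suc: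
  assumes "Nb i \<ge> 512"
  shows "real (Nb (Suc i)) \<le> real (Nb i) + real (Nb i) / 256"
proof -
  have "real (Nb (Suc i)) < cb ^ Suc i + 1" by (rule Nb_lt)
  also have "cb ^ Suc i = cb * cb ^ i" by simp
  also have "\<dots> \<le> cb * real (Nb i)" using Nb_ge[of i] by (intro mult_left_mono) (auto simp: cb_def)
  finally have "real (Nb (Suc i)) < real (Nb i) + real (Nb i) / 512 + 1" by (simp add: cb_def algebra_simps)
  moreover have "1 \<le> real (Nb i) / 512" using assms by simp
  ultimately show ?thesis by linarith
qed

lemma Nb_ev: "\<exists>i0. \<forall>i\<ge>i0. Nb i \<ge> 512"
proof -
  have "\<exists>i0. 512 < cb ^ i0" using real_arch_pow[OF cb_gt1] by blast
  then obtain i0 where i0: "512 < cb ^ i0" by blast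
  have "Nb i \<ge> 512" if "i \<ge> i0" for i
  proof -
    have "512 < real (Nb i0)" using i0 Nb_ge[of i0] by linarith
    then have "512 \<le> Nb i0" by linarith
    then show ?thesis using Nb_mono[OF that] by linarith
  qed
  then show ?thesis by blast
qed

lemma Nb_unbounded: "\<exists>j. n < Nb j"
proof -
  obtain j where "real n + 1 < cb ^ j" using real_arch_pow[OF cb_gt1] by blast
  then have "real n < real (Nb j)" using Nb_ge[of j] by linarith
  then show ?thesis by auto
qed

lemma Tb_nonneg: "Nb i \<ge> 16 \<Longrightarrow> Tb i \<ge> 0"
  unfolding Tb_def by simp

lemma Kb_le: "Nb i \<ge> 16 \<Longrightarrow> real (Kb i) * 9 \<le> Tb i"
proof -
  assume "Nb i \<ge> 16"
  then have "0 \<le> Tb i" by (rule Tb_nonneg)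
  then have "real (Kb i) = of_int \<lfloor>Tb i / 9\<rfloor>" unfolding Kb_def by simp
  also have "\<dots> \<le> Tb i / 9" by (rule of_int_floor_le)
  finally have "real (Kb i) \<le> Tb i / 9" .
  then show ?thesis by linarith
qed

lemma Kb_ge: "Tb i / 9 - 1 \<le> real (Kb i)"
proof -
  have "Tb i / 9 - 1 < of_int \<lfloor>Tb i / 9\<rfloor>" by linarith
  also have "\<dots> \<le> real (Kb i)" unfolding Kb_def by linarith
  finally show ?thesis by simp
qed

lemma bb_ge: "real (Kb i) / 4 \<le> real (bb i)"
  unfolding bb_def by linarith

lemma bb_lt: "real (bb i) < real (Kb i) / 4 + 1"
proof -
  have "0 \<le> real (Kb i) / 4" by simp
  then show ?thesis unfolding bb_def by linarith
qed

context recsetup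
begin

definition BE :: "nat \<Rightarrow> 'a set" where
  "BE i = (\<Union>S\<in>{S. S \<subseteq> {..<Kb i} \<and> card S = bb i}. {\<omega>\<in>space M. \<forall>q\<in>{1..Nb i}. pt q \<omega> \<notin> (\<Union>j\<in>S. Aset 9 (Tb i) j)})"
definition BL :: "nat \<Rightarrow> 'a set" where
  "BL i = {\<omega>\<in>space M. real (Kb i) / 4 \<le> (\<Sum>q\<in>{Nb i<..Nb (Suc i)}. indicator (\<Union>j<Kb i. Aset 9 (Tb i) j) (pt q \<omega>))}"
definition BG :: "nat \<Rightarrow> 'a set" where
  "BG i = {\<omega>\<in>space M. real (Kb i) / 4 \<le> (\<Sum>q\<in>{1..Nb (Suc i)}. (\<Sum>j<Kb i. indicator (Rset 9 (Tb i) j) (pt q \<omega>)))}"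
definition Bad :: "nat \<Rightarrow> 'a set" where "Bad i = BE i \<union> BL i \<union> BG i"

lemma BE_meas: "BE i \<in> sets M"
proof -
  have "{\<omega>\<in>space M. \<forall>q\<in>{1..Nb i}. pt q \<omega> \<notin> (\<Union>j\<in>S. Aset 9 (Tb i) j)} \<in> sets M" if "S \<subseteq> {..<Kb i}" for S
  proof -
    have fin: "finite S" using that by (auto intro: finite_subset)
    define U where "U = (\<Union>j\<in>S. Aset 9 (Tb i) j)"
    have U: "U \<in> sets borel" unfolding U_def using fin by (intro sets.finite_UN) auto
    have cU: "- U \<in> sets borel" using U by auto
    have "{\<omega>\<in>space M. \<forall>q\<in>{1..Nb i}. pt q \<omega> \<notin> U} = space M \<inter> (\<Inter>q\<in>{1..Nb i}. {\<omega>\<in>space M. pt q \<omega> \<in> - U})"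
      by auto
    also have "\<dots> \<in> sets M" using set_meas[OF _ cU] by auto
    finally show ?thesis unfolding U_def .
  qed
  moreover have "finite {S. S \<subseteq> {..<Kb i} \<and> card S = bb i}" by (rule finite_subset[of _ "Pow {..<Kb i}"]) auto
  ultimately show ?thesis unfolding BE_def by (intro sets.finite_UN) auto
qed

lemma BL_meas: "BL i \<in> sets M"
proof -
  have "(\<lambda>\<omega>. \<Sum>q\<in>{Nb i<..Nb (Suc i)}. indicator (\<Union>j<Kb i. Aset 9 (Tb i) j) (pt q \<omega>) :: real) \<in> borel_measurable M"
    by (intro borel_measurable_sum ind_meas) auto
  then show ?thesis unfolding BL_def by measurable
qed

lemma BG_meas: "BG i \<in> sets M"
proof -
  have "(\<lambda>\<omega>. \<Sum>q\<in>{1..Nb (Suc i)}. (\<Sum>j<Kb i. indicator (Rset 9 (Tb i) j) (pt q \<omega>)) :: real) \<in> borel_measurable M"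
    by (intro borel_measurable_sum ind_meas) auto
  then show ?thesis unfolding BG_def by measurable
qed

lemma Bad_meas: "Bad i \<in> sets M"
  unfolding Bad_def using BE_meas BL_meas BG_meas by auto

lemma prob_Bad:
  assumes N: "Nb i \<ge> 512"
  shows "prob (Bad i) \<le> 3 * exp (- (real (Kb i) / 9))"
proof -
  have T: "Tb i = ln (real (Nb i) / 16)" by (simp add: Tb_def)
  have KT: "real (Kb i) * 9 \<le> Tb i" using N by (intro Kb_le) auto
  have p1: "prob (BE i) \<le> exp (- real (Kb i))"
    unfolding BE_def by (rule prob_BE_gen[OF N T KT bb_ge])
  have p2: "prob (BL i) \<le> exp (- (real (Kb i) / 8))"
    unfolding BL_def by (rule prob_BL_gen[OF N T KT Nb_Suc[OF N]])
  have "real (Nb (Suc i)) \<le> 2 * real (Nb i)" using Nb_Suc[OF N] by simp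
  then have p3: "prob (BG i) \<le> exp (- (real (Kb i) / 9))"
    unfolding BG_def by (rule prob_BG_gen[OF N T KT])
  have u1: "prob (Bad i) \<le> prob (BE i \<union> BL i) + prob (BG i)"
    unfolding Bad_def using BE_meas BL_meas BG_meas by (intro measure_Un_le) auto
  have u2: "prob (BE i \<union> BL i) \<le> prob (BE i) + prob (BL i)"
    using BE_meas BL_meas by (intro measure_Un_le) auto
  have "prob (Bad i) \<le> prob (BE i) + prob (BL i) + prob (BG i)" using u1 u2 by linarith
  also have "\<dots> \<le> exp (- (real (Kb i) / 9)) + exp (- (real (Kb i) / 9)) + exp (- (real (Kb i) / 9))"
  proof -
    have "exp (- real (Kb i)) \<le> exp (- (real (Kb i) / 9))" by simp
    moreover have "exp (- (real (Kb i) / 8)) \<le> exp (- (real (Kb i) / 9))" by simp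
    ultimately show ?thesis using p1 p2 p3 by linarith
  qed
  finally show ?thesis by simp
qed

lemma summable_Bad: "summable (\<lambda>i. prob (Bad i))"
proof -
  obtain i0 where i0: "\<And>i. i \<ge> i0 \<Longrightarrow> Nb i \<ge> 512" using Nb_ev by blast
  define r where "r = exp (- (ln cb / 81))"
  define C where "C = (3::real) * exp (1/9 + ln 16 / 81)"
  have r: "0 \<le> r" "r < 1" using cb_gt1 by (auto simp: r_def)
  show ?thesis
  proof (rule summable_comparison_test')
    show "summable (\<lambda>i. C * r ^ i)" using r by (intro summable_mult summable_geometric) auto
    fix i assume "i \<ge> i0"
    then have N: "Nb i \<ge> 512" by (rule i0)
    have "norm (prob (Bad i)) = prob (Bad i)" by simp
    also have "\<dots> \<le> 3 * exp (- (real (Kb i) / 9))" by (rule prob_Bad[OF N])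
    also have "\<dots> \<le> C * r ^ i"
    proof -
      have "Tb i \<ge> real i * ln cb - ln 16"
      proof -
        have "0 < cb ^ i" using cb_gt1 by simp
        then have "ln (cb ^ i) \<le> ln (real (Nb i))" using Nb_ge[of i] by simp
        moreover have "ln (cb ^ i) = real i * ln cb" using cb_gt1 by (simp add: ln_realpow)
        moreover have "Tb i = ln (real (Nb i)) - ln 16" using N by (simp add: Tb_def ln_div)
        ultimately show ?thesis by linarith
      qed
      then have "- (real (Kb i) / 9) \<le> (1/9 + ln 16 / 81) + real i * (- (ln cb / 81))"
        using Kb_ge[of i] by (simp add: field_simps)
      then have "exp (- (real (Kb i) / 9)) \<le> exp ((1/9 + ln 16 / 81) + real i * (- (ln cb / 81)))"
        by simp
      also have "\<dots> = exp (1/9 + ln 16 / 81) * r ^ i"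
        by (simp only: exp_add exp_of_nat_mult r_def)
      finally show ?thesis by (simp add: C_def)
    qed
    finally show "norm (prob (Bad i)) \<le> C * r ^ i" .
  qed
qed

end

lemma sum_ind_card:
  assumes "finite Q"
  shows "(\<Sum>q\<in>Q. indicator U (f q) :: real) = real (card {q\<in>Q. f q \<in> U})"
proof -
  have "real (card {q\<in>Q. f q \<in> U}) = (\<Sum>q\<in>{q\<in>Q. f q \<in> U}. 1)" by simp
  also have "\<dots> = (\<Sum>q\<in>Q. if f q \<in> U then 1 else 0)" by (rule sum.inter_filter[OF assms])
  also have "\<dots> = (\<Sum>q\<in>Q. indicator U (f q))" by (simp add: indicator_def of_bool_def)
  finally show ?thesis by simp
qed

context recsetup
begin

lemma records_lb:
  assumes \<omega>: "\<omega> \<in> space M" "\<omega> \<notin> Bad i" and N: "Nb i \<ge> 512" and n: "Nb i \<le> n" "n \<le> Nb (Suc i)"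
  shows "real (Kb i) / 4 \<le> real (num_records d (\<lambda>k j. X k j \<omega>) n)"
proof -
  define x where "x = (\<lambda>k j. X k j \<omega>)"
  define K where "K = Kb i"
  define T where "T = Tb i"
  define Nn where "Nn = Nb i"
  define Mm where "Mm = Nb (Suc i)"
  have ptx: "(x q 0, x q 1) = pt q \<omega>" for q by (simp add: x_def pt_def)
  define Good where "Good = {j. j < K \<and> (\<exists>q\<in>{1..Nn}. pt q \<omega> \<in> Aset 9 T j) \<and> (\<forall>q\<in>{Nn<..Mm}. pt q \<omega> \<notin> Aset 9 T j)
       \<and> (\<forall>q\<in>{1..Mm}. pt q \<omega> \<notin> Rset 9 T j)}"
  define E where "E = {j. j < K \<and> (\<forall>q\<in>{1..Nn}. pt q \<omega> \<notin> Aset 9 T j)}"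
  define L where "L = {q\<in>{Nn<..Mm}. pt q \<omega> \<in> (\<Union>j<K. Aset 9 T j)}"
  define Gs where "Gs = (\<Sum>q\<in>{1..Mm}. card {j. j < K \<and> pt q \<omega> \<in> Rset 9 T j})"
  have c1: "K \<le> card Good + card E + card L + Gs"
    using cert_count[where H=9 and x=x and KK=K and N=Nn and M=Mm and T=T] unfolding Good_def E_def L_def Gs_def ptx by simp
  have c2: "card Good \<le> num_records d x n"
    using cert_good[OF d2, where H=9 and x=x and KK=K and N=Nn and M=Mm and T=T and n=n] n unfolding Good_def ptx Nn_def Mm_def by simp
  have c3: "real (card E) < real K / 4"
  proof -
    have "card E < bb i"
    proof (rule ccontr)
      assume "\<not> card E < bb i"
      then have "bb i \<le> card E" by simp
      then obtain S where S: "S \<subseteq> E" "card S = bb i" by (rule obtain_subset_with_card_n)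
      have "S \<in> {S. S \<subseteq> {..<Kb i} \<and> card S = bb i}" using S by (auto simp: E_def K_def)
      moreover have "\<omega> \<in> {\<omega>\<in>space M. \<forall>q\<in>{1..Nb i}. pt q \<omega> \<notin> (\<Union>j\<in>S. Aset 9 (Tb i) j)}"
        using S \<omega>(1) by (auto simp: E_def Nn_def T_def)
      ultimately have "\<omega> \<in> BE i" unfolding BE_def by blast
      then show False using \<omega>(2) by (simp add: Bad_def)
    qed
    then have "real (card E) \<le> real (bb i) - 1" by linarith
    then show ?thesis using bb_lt[of i] by (simp add: K_def)
  qed
  have c4: "real (card L) < real K / 4"
  proof -
    have "real (card L) = (\<Sum>q\<in>{Nn<..Mm}. indicator (\<Union>j<K. Aset 9 T j) (pt q \<omega>))"
      unfolding L_def by (rule sum_ind_card[symmetric]) simp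
    moreover have "\<omega> \<notin> BL i" using \<omega>(2) by (simp add: Bad_def)
    ultimately show ?thesis using \<omega>(1) by (simp add: BL_def K_def T_def Nn_def Mm_def)
  qed
  have c5: "real Gs < real K / 4"
  proof -
    have "real Gs = (\<Sum>q\<in>{1..Mm}. (\<Sum>j<K. indicator (Rset 9 T j) (pt q \<omega>)))"
    proof -
      have "real (card {j. j < K \<and> pt q \<omega> \<in> Rset 9 T j}) = (\<Sum>j<K. indicator (Rset 9 T j) (pt q \<omega>))" for q
      proof -
        have "(\<Sum>j<K. indicator (Rset 9 T j) (pt q \<omega>) :: real) = real (card {j\<in>{..<K}. (\<lambda>j. pt q \<omega> \<in> Rset 9 T j) j})"
          using sum_ind_card[of "{..<K}" "{True}" "\<lambda>j. pt q \<omega> \<in> Rset 9 T j"] by (simp add: indicator_def)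
        then show ?thesis by simp
      qed
      then show ?thesis unfolding Gs_def by simp
    qed
    moreover have "\<omega> \<notin> BG i" using \<omega>(2) by (simp add: Bad_def)
    ultimately show ?thesis using \<omega>(1) by (simp add: BG_def K_def T_def Mm_def)
  qed
  have "real K \<le> real (card Good) + real (card E) + real (card L) + real Gs" using c1 by linarith
  then have "real K / 4 < real (card Good)" using c3 c4 c5 by linarith
  also have "\<dots> \<le> real (num_records d x n)" using c2 by simp
  finally show ?thesis by (simp add: K_def x_def)
qed

end

lemma asy1: "\<forall>\<^sub>F x in at_top. ln (x::real) / (2 * ln (ln x)) \<le> (ln x - ln 32) / 36 - 1/4"
  by real_asymp
lemma asy2: "\<forall>\<^sub>F x in at_top. 0 < ln (ln (x::real))"
  by real_asymp

lemma asy3: "\<forall>\<^sub>F x in at_top. 0 < ln (x::real)"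
  by real_asymp

lemma asy_nat: "\<forall>\<^sub>F n in sequentially. ln (real n) / (2 * ln (ln (real n))) \<le> (ln (real n) - ln 32) / 36 - 1/4
    \<and> 0 < ln (ln (real n)) \<and> 0 < ln (real n)"
  using eventually_compose_filterlim[OF eventually_conj[OF asy1 eventually_conj[OF asy2 asy3]] filterlim_real_sequentially] .

context recsetup
begin

lemma ev_records:
  assumes \<omega>: "\<omega> \<in> space M" and ev: "eventually (\<lambda>i. \<omega> \<in> space M - Bad i) sequentially"
  shows "\<forall>\<^sub>F n in sequentially. (ln (real n) - ln 32) / 36 - 1/4 \<le> real (num_records d (\<lambda>k j. X k j \<omega>) n)"
proof -
  obtain i0 where i0: "\<And>i. i \<ge> i0 \<Longrightarrow> \<omega> \<in> space M - Bad i" using ev by (auto simp: eventually_sequentially)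
  obtain i1 where i1: "\<And>i. i \<ge> i1 \<Longrightarrow> Nb i \<ge> 512" using Nb_ev by blast
  define i2 where "i2 = max i0 i1"
  have "(ln (real n) - ln 32) / 36 - 1/4 \<le> real (num_records d (\<lambda>k j. X k j \<omega>) n)" if n: "n \<ge> Nb i2" for n
  proof -
    define j where "j = (LEAST j. n < Nb j)"
    have nj: "n < Nb j" unfolding j_def using Nb_unbounded[of n] by (metis LeastI)
    have "j > i2"
    proof (rule ccontr)
      assume "\<not> i2 < j"
      then have "Nb j \<le> Nb i2" by (intro Nb_mono) auto
      then show False using nj n by simp
    qed
    then obtain i where ji: "j = Suc i" and ii: "i \<ge> i2" by (cases j) auto
    have ni: "Nb i \<le> n"
    proof -
      have "i < j" using ji by simp
      then have "\<not> n < Nb i" unfolding j_def by (rule not_less_Least)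
      then show ?thesis by simp
    qed
    have N: "Nb i \<ge> 512" using i1 ii by (simp add: i2_def)
    have \<omega>i: "\<omega> \<notin> Bad i" using i0[of i] ii by (simp add: i2_def)
    have rec: "real (Kb i) / 4 \<le> real (num_records d (\<lambda>k j. X k j \<omega>) n)"
      using records_lb[OF \<omega> \<omega>i N ni] nj ji by simp
    have "real n \<le> 2 * real (Nb i)" using Nb_Suc[OF N] nj ji by simp
    then have "real n / 32 \<le> real (Nb i) / 16" by simp
    moreover have "0 < real n" using ni N by simp
    ultimately have "ln (real n / 32) \<le> Tb i" unfolding Tb_def by simp
    moreover have "ln (real n / 32) = ln (real n) - ln 32" using \<open>0 < real n\<close> by (simp add: ln_div)
    ultimately have "(ln (real n) - ln 32) / 36 - 1/4 \<le> (Tb i / 9 - 1) / 4" by simp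
    also have "\<dots> \<le> real (Kb i) / 4" using Kb_ge[of i] by simp
    finally have "(ln (real n) - ln 32) / 36 - 1/4 \<le> real (Kb i) / 4" .
    then show ?thesis using rec by linarith
  qed
  then show ?thesis unfolding eventually_sequentially by blast
qed

theorem main:
  "AE \<omega> in M. liminf (\<lambda>n. ereal (real (num_records d (\<lambda>k j. X k j \<omega>) n)
                 / (ln (real n) / (real d * ln (ln (real n)))))) \<ge> 1"
proof -
  have AE: "AE \<omega> in M. eventually (\<lambda>i. \<omega> \<in> space M - Bad i) sequentially"
    by (rule borel_cantelli_AE1[OF Bad_meas _ summable_Bad]) (simp add: less_top[symmetric])
  show ?thesis
  proof (rule AE_mp[OF AE_space AE_mp[OF AE]], intro AE_I2 impI)
    fix \<omega> assume \<omega>: "\<omega> \<in> space M" and ev: "eventually (\<lambda>i. \<omega> \<in> space M - Bad i) sequentially"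
    have "\<forall>\<^sub>F n in sequentially. 1 \<le> ereal (real (num_records d (\<lambda>k j. X k j \<omega>) n)
                 / (ln (real n) / (real d * ln (ln (real n)))))"
      using ev_records[OF \<omega> ev] asy_nat
    proof eventually_elim
      case (elim n)
      define r where "r = real (num_records d (\<lambda>k j. X k j \<omega>) n)"
      define l where "l = ln (real n)"
      define ll where "ll = ln (ln (real n))"
      have ll: "0 < ll" using elim by (simp add: ll_def)
      have l: "0 < l"
        using elim by (simp add: l_def)
      have d: "2 \<le> real d" using d2 by simp
      have "l / (real d * ll) \<le> l / (2 * ll)"
        using l ll d by (intro divide_left_mono mult_right_mono mult_pos_pos) auto
      also have "\<dots> \<le> r" using elim by (simp add: r_def l_def ll_def)
      finally have le: "l / (real d * ll) \<le> r" .
      have pos: "0 < l / (real d * ll)" using l ll d by simp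
      have "1 \<le> r / (l / (real d * ll))" using le pos by (simp only: le_divide_eq_1_pos)
      then show ?case by (simp add: r_def l_def ll_def)
    qed
    then show "1 \<le> liminf (\<lambda>n. ereal (real (num_records d (\<lambda>k j. X k j \<omega>) n)
                 / (ln (real n) / (real d * ln (ln (real n))))))"
      by (rule Liminf_bounded)
  qed
qed

end

theorem theorem3p4:
  fixes M :: "'a measure" and X :: "nat \<Rightarrow> nat \<Rightarrow> 'a \<Rightarrow> real" and d :: nat
  assumes "prob_space M"
    and "d \<ge> 2"
    and "prob_space.indep_vars M (\<lambda>_. borel) (\<lambda>(k, j). X k j) ({1..} \<times> {..<d})"
    and "\<And>k j. k \<ge> 1 \<Longrightarrow> j < d \<Longrightarrow> distributed M lborel (X k j) (exponential_density 1)"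
  shows "AE \<omega> in M. liminf (\<lambda>n. ereal (real (num_records d (\<lambda>k j. X k j \<omega>) n)
                 / (ln (real n) / (real d * ln (ln (real n)))))) \<ge> 1"
proof -
  interpret recsetup M X d
    by (intro recsetup.intro recsetup_axioms.intro assms)
  show ?thesis by (rule main)
qed

end
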